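(* Let $X$ be uniformly distributed on $[-\pi,\pi]$. Set $\varphi_0\equiv 1$, $\varphi_{2k}(x)=\sqrt{2}\cos(kx)$ and $\varphi_{2k+1}(x)=\sqrt{2}\sin(kx)$ for $k\geq 1$, and for $l\in\mathbb{N}$ let $m_D=\mathrm{Span}\{\varphi_j : j=0,\dots,2l\}$, of linear dimension $D=2l+1$. If $m_D$ satisfies the small-ball condition with constants $(\beta_0,\kappa_0)$, i.e. $\mathbb{P}(|s(X)|\geq\kappa_0\|s\|_2)\geq\beta_0$ for every $s\in m_D$ (with $\kappa_0,\beta_0>0$), then \[ \beta_0\leq C\,\kappa_0^{-1/2}D^{-3/4} \] for some absolute constant $C>0$ (the paper states that $C=3^{1/4}\sqrt{2}$ works).
   Context: $\|\cdot\|_2$ denotes the norm of $L_2(P^X)$, $P^X$ being the uniform distribution on $[-\pi,\pi]$. *)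

theory Defs
  imports "HOL-Probability.Probability"
begin

definition phi :: "nat \<Rightarrow> real \<Rightarrow> real" where
  "phi j x = (if j = 0 then 1
              else if even j then sqrt 2 * cos (real (j div 2) * x)
              else sqrt 2 * sin (real ((j + 1) div 2) * x))"

definition mD :: "nat \<Rightarrow> (real \<Rightarrow> real) set" where
  "mD l = {s. \<exists>c :: nat \<Rightarrow> real. s = (\<lambda>x. \<Sum>j\<le>2*l. c j * phi j x)}"

definition unifX :: "real measure" where
  "unifX = uniform_measure lborel {-pi..pi}"

definition L2norm :: "(real \<Rightarrow> real) \<Rightarrow> real" where
  "L2norm s = sqrt (\<integral>x. (s x)\<^sup>2 \<partial>unifX)"

definition small_ball :: "(real \<Rightarrow> real) set \<Rightarrow> real \<Rightarrow> real \<Rightarrow> bool" where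
  "small_ball M beta0 kappa0 \<longleftrightarrow>
     (\<forall>s\<in>M. measure unifX {x \<in> space unifX. \<bar>s x\<bar> \<ge> kappa0 * L2norm s} \<ge> beta0)"

end

theory Submission
  imports Defs
begin

lemma jordan:
  assumes "0 \<le> y" "y \<le> pi/2"
  shows "2*y/pi \<le> sin y"
proof -
  have cv: "convex_on {0..pi} (\<lambda>x. - sin x)"
  proof (rule convex_on_realI[where f'="\<lambda>x. - cos x"])
    show "connected {0..pi}" by simp
    show "((\<lambda>x. - sin x) has_real_derivative - cos x) (at x)" for x
      by (auto intro!: derivative_eq_intros)
    show "- cos x \<le> - cos y" if "x \<in> {0..pi}" "y \<in> {0..pi}" "x \<le> y" for x y
      using that cos_monotone_0_pi_le by auto
  qed
  define t where "t = 2*y/pi"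
  have t: "0 \<le> t" "t \<le> 1" using assms by (auto simp: t_def field_simps)
  have "- sin ((1 - t) *\<^sub>R 0 + t *\<^sub>R (pi/2)) \<le> (1 - t) * (- sin 0) + t * (- sin (pi/2))"
    by (rule convex_onD[OF cv]) (use t in auto)
  moreover have "(1 - t) *\<^sub>R 0 + t *\<^sub>R (pi/2) = y" by (simp add: t_def)
  ultimately show ?thesis by (simp add: t_def)
qed

lemma abs_sin_half:
  assumes "\<bar>x\<bar> \<le> pi"
  shows "\<bar>x\<bar>/pi \<le> \<bar>sin (x/2)\<bar>"
proof (cases "x \<ge> 0")
  case True
  then have "2*(x/2)/pi \<le> sin (x/2)" using assms by (intro jordan) auto
  then show ?thesis using True by simp
next
  case False
  then have "2*(-x/2)/pi \<le> sin (-x/2)" using assms by (intro jordan) auto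
  then show ?thesis using False by simp
qed

definition Dk :: "nat \<Rightarrow> real \<Rightarrow> real" where
  "Dk m x = 1 + 2 * (\<Sum>k=1..m. cos (real k * x))"
definition Gk :: "nat \<Rightarrow> real \<Rightarrow> real" where
  "Gk n x = real n + 2 * (\<Sum>k=1..n. (real n - real k) * cos (real k * x))"

lemma Dk_sin: "Dk m x * sin (x/2) = sin ((real m + 1/2) * x)"
proof (induction m)
  case 0 then show ?case by (simp add: Dk_def)
next
  case (Suc m)
  have "Dk (Suc m) x = Dk m x + 2 * cos ((real m + 1) * x)"
    by (simp add: Dk_def algebra_simps)
  then have "Dk (Suc m) x * sin (x/2) = sin ((real m + 1/2) * x) + 2 * cos ((real m + 1) * x) * sin (x/2)"
    using Suc by (simp add: algebra_simps)
  also have "2 * cos ((real m + 1) * x) * sin (x/2) = sin ((real m + 1) * x + x/2) - sin ((real m + 1) * x - x/2)"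
    by (simp add: sin_add sin_diff)
  also have "(real m + 1) * x + x/2 = (real (Suc m) + 1/2) * x" by (simp add: algebra_simps)
  also have "(real m + 1) * x - x/2 = (real m + 1/2) * x" by (simp add: algebra_simps)
  finally show ?case by simp
qed

lemma Gk_rec: "Gk (Suc n) x = Gk n x + Dk n x"
proof -
  have "(\<Sum>k=1..Suc n. (real (Suc n) - real k) * cos (real k * x))
      = (\<Sum>k=1..n. (real (Suc n) - real k) * cos (real k * x))"
    by (simp add: sum.cl_ivl_Suc)
  also have "\<dots> = (\<Sum>k=1..n. (real n - real k) * cos (real k * x)) + (\<Sum>k=1..n. cos (real k * x))"
    by (simp add: sum.distrib[symmetric] algebra_simps)
  finally show ?thesis by (simp add: Gk_def Dk_def algebra_simps)
qed

lemma sin_sq_diff: "sin (a::real) ^ 2 - sin b ^ 2 = sin (a + b) * sin (a - b)"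
proof -
  have "sin (a + b) * sin (a - b) = (sin a * cos b)^2 - (cos a * sin b)^2"
    unfolding sin_add sin_diff power2_eq_square by (simp add: algebra_simps)
  also have "\<dots> = sin a ^ 2 * (1 - sin b ^ 2) - (1 - sin a ^ 2) * sin b ^ 2"
    by (simp add: power_mult_distrib cos_squared_eq)
  finally show ?thesis by (simp add: algebra_simps)
qed

lemma Gk_sin: "Gk n x * sin (x/2) ^ 2 = sin (real n * x / 2) ^ 2"
proof (induction n)
  case 0 then show ?case by (simp add: Gk_def)
next
  case (Suc n)
  have "Gk (Suc n) x * sin (x/2) ^ 2 = sin (real n * x / 2) ^ 2 + Dk n x * sin (x/2) * sin (x/2)"
    using Suc by (simp add: Gk_rec algebra_simps power2_eq_square)
  also have "\<dots> = sin (real n * x / 2) ^ 2 + sin ((real n + 1/2) * x) * sin (x/2)"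
    by (simp add: Dk_sin)
  also have "sin ((real n + 1/2) * x) * sin (x/2) = sin (real (Suc n) * x / 2) ^ 2 - sin (real n * x / 2) ^ 2"
    by (subst sin_sq_diff) (simp add: algebra_simps add_divide_distrib)
  finally show ?case by simp
qed

lemma sum_even_phi:
  "(\<Sum>j\<le>2*l. (if j = 0 then a 0 else if even j then sqrt 2 * a (j div 2) else 0) * phi j x)
     = a 0 + (\<Sum>k=1..l. 2 * a k * cos (real k * x))"
proof (induction l)
  case 0 then show ?case by (simp add: phi_def)
next
  case (Suc l)
  have e: "2 * Suc l = Suc (Suc (2*l))" by simp
  have o: "odd (Suc (2*l))" by simp
  have d: "Suc (Suc (2*l)) div 2 = Suc l" by simp
  show ?case unfolding e using Suc
    by (simp add: sum.atMost_Suc sum.cl_ivl_Suc phi_def d del: mult_Suc_right)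
qed

lemma Gk_mD: "Gk (Suc l) \<in> mD l"
proof -
  define a where "a k = (if k = 0 then real (Suc l) else real (Suc l) - real k)" for k
  have "Gk (Suc l) x = (\<Sum>j\<le>2*l. (if j = 0 then a 0 else if even j then sqrt 2 * a (j div 2) else 0) * phi j x)" for x
  proof -
    have "(\<Sum>k=1..Suc l. (real (Suc l) - real k) * cos (real k * x)) = (\<Sum>k=1..l. a k * cos (real k * x))"
      by (simp add: sum.cl_ivl_Suc a_def)
    then show ?thesis unfolding sum_even_phi Gk_def
      by (simp add: a_def sum_distrib_left algebra_simps)
  qed
  then have "Gk (Suc l) = (\<lambda>x. \<Sum>j\<le>2*l. (if j = 0 then a 0 else if even j then sqrt 2 * a (j div 2) else 0) * phi j x)"
    by (rule ext)
  then show ?thesis unfolding mD_def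
    by (intro CollectI exI[where x="\<lambda>j. if j = 0 then a 0 else if even j then sqrt 2 * a (j div 2) else 0"])
qed

lemma Gk_upper:
  assumes "x \<in> {-pi..pi}" "x \<noteq> 0"
  shows "0 \<le> Gk n x \<and> Gk n x \<le> pi^2 / x^2"
proof -
  have a: "\<bar>x\<bar>/pi \<le> \<bar>sin (x/2)\<bar>" using assms abs_sin_half by auto
  have xp: "0 < \<bar>x\<bar>/pi" using assms by auto
  have "(\<bar>x\<bar>/pi)^2 \<le> \<bar>sin (x/2)\<bar>^2" using a xp by (intro power_mono) auto
  then have s2: "x^2/pi^2 \<le> sin (x/2)^2" by (simp add: power_divide)
  have spos: "0 < sin (x/2)^2" using s2 assms by (smt (verit) divide_pos_pos pi_gt_zero zero_less_power2)
  have G: "Gk n x = sin (real n * x / 2) ^ 2 / sin (x/2)^2"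
    using Gk_sin[of n x] spos by (simp add: field_simps)
  have "Gk n x \<le> 1 / sin (x/2)^2" unfolding G using spos
    by (intro divide_right_mono) (auto simp: abs_square_le_1)
  also have "\<dots> \<le> 1 / (x^2/pi^2)" using s2 assms spos by (intro divide_left_mono) (auto intro!: mult_pos_pos)
  finally have "Gk n x \<le> 1 / (x^2/pi^2)" .
  moreover have "0 \<le> Gk n x" unfolding G by simp
  ultimately show ?thesis by simp
qed

lemma sum_nk: "(\<Sum>k=1..n. (real n - real k)) = real n * (real n - 1) / 2"
proof (induction n)
  case 0 then show ?case by simp
next
  case (Suc n)
  have "(\<Sum>k=1..Suc n. (real (Suc n) - real k)) = (\<Sum>k=1..n. ((real n - real k) + 1))"
    by (simp add: sum.cl_ivl_Suc algebra_simps)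
  also have "\<dots> = (\<Sum>k=1..n. (real n - real k)) + real n"
    by (simp only: sum.distrib) simp
  finally have "(\<Sum>k=1..Suc n. (real (Suc n) - real k)) = (\<Sum>k=1..n. (real n - real k)) + real n" .
  then show ?case using Suc by (simp add: field_simps)
qed

lemma Gk_lower:
  assumes "n \<ge> 1" "\<bar>x\<bar> \<le> 1 / real n"
  shows "real n ^ 2 / 2 \<le> Gk n x"
proof -
  have c: "1/2 \<le> cos (real k * x)" if "k \<in> {1..n}" for k
  proof -
    have "real k * \<bar>x\<bar> \<le> real n * (1 / real n)"
      using that assms by (intro mult_mono) auto
    then have "\<bar>real k * x\<bar> \<le> real n * (1 / real n)" by (simp add: abs_mult)
    also have "\<dots> = 1" using assms by simp
    finally have k1: "\<bar>real k * x\<bar> \<le> 1" .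
    have "pi/3 \<ge> 1" using pi_gt3 by simp
    then have "cos (pi/3) \<le> cos \<bar>real k * x\<bar>"
      using k1 by (intro cos_monotone_0_pi_le) auto
    then show ?thesis by (simp add: cos_60)
  qed
  have "(\<Sum>k=1..n. (real n - real k) * (1/2)) \<le> (\<Sum>k=1..n. (real n - real k) * cos (real k * x))"
    by (intro sum_mono mult_left_mono c) auto
  moreover have "(\<Sum>k=1..n. (real n - real k) * (1/2)) = real n * (real n - 1) / 4"
    using sum_nk[of n] by (simp add: sum_divide_distrib[symmetric])
  ultimately have "real n * (real n - 1) / 4 \<le> (\<Sum>k=1..n. (real n - real k) * cos (real k * x))" by simp
  then have "real n + real n * (real n - 1) / 2 \<le> Gk n x" by (simp add: Gk_def)
  moreover have "real n ^ 2 / 2 \<le> real n + real n * (real n - 1) / 2"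
    by (simp add: power2_eq_square field_simps)
  ultimately show ?thesis by linarith
qed

lemma Gk_meas: "Gk n \<in> borel_measurable borel"
  unfolding Gk_def by measurable

lemma Gk_bound: "\<bar>Gk n x\<bar> \<le> real n + 2 * (\<Sum>k=1..n. \<bar>real n - real k\<bar>)"
proof -
  have "\<bar>\<Sum>k=1..n. (real n - real k) * cos (real k * x)\<bar> \<le> (\<Sum>k=1..n. \<bar>(real n - real k) * cos (real k * x)\<bar>)"
    by (rule sum_abs)
  also have "\<dots> \<le> (\<Sum>k=1..n. \<bar>real n - real k\<bar>)"
    by (intro sum_mono) (auto simp: abs_mult intro: mult_left_le)
  finally show ?thesis unfolding Gk_def by (simp add: abs_mult) linarith?
qed

lemma emeas_pi: "emeasure lborel {-pi..pi} = ennreal (2*pi)"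
  by simp

lemma unif_prob: "prob_space unifX"
  unfolding unifX_def by (rule prob_space_uniform_measure) auto

lemma sets_unifX[measurable_cong, simp]: "sets unifX = sets borel"
  unfolding unifX_def by simp

lemma space_unifX[simp]: "space unifX = UNIV"
  unfolding unifX_def by simp

lemma measure_unifX:
  assumes "B \<in> sets borel"
  shows "measure unifX B = measure lborel ({-pi..pi} \<inter> B) / (2*pi)"
  unfolding unifX_def using assms by (subst measure_uniform_measure) auto

lemma L2_lower:
  assumes "n \<ge> 1"
  shows "sqrt (real n ^ 3 / (4*pi)) \<le> L2norm (Gk n)"
proof -
  interpret P: prob_space unifX by (rule unif_prob)
  have np: "0 < real n" using assms by simp
  define c where "c = real n ^ 4 / 4"
  define I where "I = {-1/real n..1/real n}"
  have Isub: "I \<subseteq> {-pi..pi}"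
  proof -
    have "1 / real n \<le> 1" using assms by simp
    then have "1 / real n \<le> pi" using pi_gt3 by linarith
    then show ?thesis unfolding I_def by auto
  qed
  have pw: "c * indicator I x \<le> (Gk n x)^2" for x
  proof (cases "x \<in> I")
    case True
    then have "\<bar>x\<bar> \<le> 1 / real n" unfolding I_def by auto
    then have "real n ^ 2 / 2 \<le> Gk n x" by (rule Gk_lower[OF assms])
    then have "(real n ^ 2 / 2)^2 \<le> (Gk n x)^2" by (intro power_mono) auto
    moreover have "(real n ^ 2 / 2)^2 = c" by (simp add: c_def power2_eq_square power4_eq_xxxx)
    ultimately show ?thesis using True by simp
  next
    case False then show ?thesis by simp
  qed
  have meas: "(\<lambda>x. (Gk n x)^2) \<in> borel_measurable unifX"
    using Gk_meas by measurable
  have int1: "integrable unifX (\<lambda>x. (Gk n x)^2)"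
  proof (rule P.integrable_const_bound[where B="(real n + 2 * (\<Sum>k=1..n. \<bar>real n - real k\<bar>))^2"])
    show "AE x in unifX. norm ((Gk n x)^2) \<le> (real n + 2 * (\<Sum>k=1..n. \<bar>real n - real k\<bar>))^2"
    proof (intro AE_I2)
      fix x
      have "\<bar>Gk n x\<bar> \<le> real n + 2 * (\<Sum>k=1..n. \<bar>real n - real k\<bar>)" by (rule Gk_bound)
      then have "\<bar>Gk n x\<bar>^2 \<le> (real n + 2 * (\<Sum>k=1..n. \<bar>real n - real k\<bar>))^2"
        by (intro power_mono) auto
      then show "norm ((Gk n x)^2) \<le> (real n + 2 * (\<Sum>k=1..n. \<bar>real n - real k\<bar>))^2"
        by (simp only: real_norm_def power2_abs abs_power2)
    qed
  qed (rule meas)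
  have int2: "integrable unifX (\<lambda>x. c * indicator I x)"
    unfolding I_def by (intro integrable_mult_right) (auto intro!: P.integrable_const_bound[where B=1])
  have "(\<integral>x. c * indicator I x \<partial>unifX) \<le> (\<integral>x. (Gk n x)^2 \<partial>unifX)"
    by (rule integral_mono[OF int2 int1 pw])
  moreover have "(\<integral>x. c * indicator I x \<partial>unifX) = c * measure unifX I"
    unfolding I_def by simp
  moreover have "measure unifX I = (2 / real n) / (2*pi)"
    using Isub np unfolding I_def by (subst measure_unifX) (auto simp: Int_absorb1)
  ultimately have "c * ((2 / real n) / (2*pi)) \<le> (\<integral>x. (Gk n x)^2 \<partial>unifX)" by simp
  moreover have "c * ((2 / real n) / (2*pi)) = real n ^ 3 / (4*pi)"
    using np by (simp add: c_def field_simps power_def)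
  ultimately show ?thesis unfolding L2norm_def by simp
qed

lemma final_arith:
  assumes k: "kappa0 > 0"
  shows "1 / sqrt (kappa0 * sqrt (real (Suc l) ^ 3 / (4*pi)))
           \<le> 4 * kappa0 powr (-1/2) * real (2*l+1) powr (-3/4)"
proof -
  define q where "q = real (Suc l) ^ 3 / (4*pi)"
  define D where "D = real (2*l+1)"
  have qp: "q > 0" unfolding q_def by simp
  have Dp: "D > 0" unfolding D_def by simp
  have "sqrt (sqrt q) = q powr (1/4)"
    using qp by (simp add: powr_half_sqrt[symmetric] powr_powr)
  then have sq: "sqrt (kappa0 * sqrt q) = kappa0 powr (1/2) * q powr (1/4)"
    using k by (simp add: real_sqrt_mult powr_half_sqrt)
  have lhs: "1 / sqrt (kappa0 * sqrt q) = kappa0 powr (-1/2) * q powr (-1/4)"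
    unfolding sq by (simp add: powr_minus_divide)
  have "(q powr (-1/4))^4 = q powr (-1)"
    using qp by (simp add: powr_power)
  also have "\<dots> = 4*pi / real (Suc l) ^ 3" by (simp add: powr_minus_divide q_def)
  also have "\<dots> \<le> 256 / D^3"
  proof -
    have "D \<le> 2 * real (Suc l)" unfolding D_def by simp
    then have "D^3 \<le> (2 * real (Suc l))^3" using Dp by (intro power_mono) auto
    moreover have "(2 * real (Suc l))^3 = 8 * real (Suc l)^3"
      by (simp only: power_mult_distrib) simp
    ultimately have d3: "D^3 \<le> 8 * real (Suc l) ^ 3" by simp
    have "4*pi * D^3 \<le> 4*4 * (8 * real (Suc l) ^ 3)"
      using pi_less_4 d3 Dp by (intro mult_mono) auto
    moreover have "0 \<le> (1 + real l)^3" by simp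
    ultimately have "4*pi * D^3 \<le> 256 * real (Suc l) ^ 3" by (simp; linarith)
    then show ?thesis using Dp by (simp add: field_simps)
  qed
  also have "256 / D^3 = (4 * D powr (-3/4))^4"
  proof -
    have "(D powr (-3/4))^4 = D powr (-3)" using Dp by (simp add: powr_power)
    also have "\<dots> = 1 / D^3" using Dp by (simp add: powr_minus_divide powr_numeral)
    finally have "(D powr (-3/4))^4 = 1 / D^3" .
    then show ?thesis by (simp only: power_mult_distrib) simp
  qed
  finally have "q powr (-1/4) \<le> 4 * D powr (-3/4)"
    by (subst (asm) power_mono_iff) auto
  then have "kappa0 powr (-1/2) * q powr (-1/4) \<le> kappa0 powr (-1/2) * (4 * D powr (-3/4))"
    by (intro mult_left_mono) auto
  then show ?thesis unfolding q_def[symmetric] D_def[symmetric] lhs by (simp add: algebra_simps)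
qed

theorem proposition2:
  "\<exists>C>0. \<forall>(l::nat) (beta0::real) (kappa0::real).
     kappa0 > 0 \<longrightarrow> beta0 > 0 \<longrightarrow> small_ball (mD l) beta0 kappa0 \<longrightarrow>
     beta0 \<le> C * kappa0 powr (-1/2) * real (2*l+1) powr (-3/4)"
proof (intro exI[of _ 4] conjI allI impI)
  fix l :: nat and beta0 kappa0 :: real
  assume k: "kappa0 > 0" and b: "beta0 > 0" and sb: "small_ball (mD l) beta0 kappa0"
  define n where "n = Suc l"
  define S where "S = {x \<in> space unifX. kappa0 * L2norm (Gk n) \<le> \<bar>Gk n x\<bar>}"
  have b1: "beta0 \<le> measure unifX S"
    using sb Gk_mD[of l] unfolding small_ball_def S_def n_def by blast
  define t0 where "t0 = kappa0 * sqrt (real n ^ 3 / (4*pi))"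
  have t0p: "t0 > 0" using k unfolding t0_def n_def by simp
  have t0le: "t0 \<le> kappa0 * L2norm (Gk n)"
    unfolding t0_def using k L2_lower[of n] by (intro mult_left_mono) (auto simp: n_def)
  define r where "r = pi / sqrt t0"
  have rp: "r \<ge> 0" using t0p by (simp add: r_def)
  have Smeas: "S \<in> sets borel"
    unfolding S_def using Gk_meas by simp measurable
  have sub: "{-pi..pi} \<inter> S \<subseteq> {-r..r}"
  proof
    fix x assume x: "x \<in> {-pi..pi} \<inter> S"
    show "x \<in> {-r..r}"
    proof (cases "x = 0")
      case True then show ?thesis using rp by simp
    next
      case False
      have G: "0 \<le> Gk n x \<and> Gk n x \<le> pi^2 / x^2" using Gk_upper[of x n] x False by auto
      have "t0 \<le> Gk n x" using x t0le G unfolding S_def by auto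
      then have "t0 \<le> pi^2 / x^2" using G by linarith
      then have "x^2 \<le> pi^2 / t0" using t0p False by (simp add: field_simps)
      then have "sqrt (x^2) \<le> sqrt (pi^2 / t0)" by (rule real_sqrt_le_mono)
      then have "\<bar>x\<bar> \<le> r" unfolding r_def by (simp add: real_sqrt_divide)
      then show ?thesis by auto
    qed
  qed
  have "measure unifX S = measure lborel ({-pi..pi} \<inter> S) / (2*pi)"
    by (rule measure_unifX[OF Smeas])
  also have "\<dots> \<le> measure lborel {-r..r} / (2*pi)"
    using sub Smeas rp by (intro divide_right_mono measure_mono_fmeasurable) (auto simp: fmeasurable_def)
  also have "\<dots> = 1 / sqrt t0" using rp t0p by (simp add: r_def)
  finally have "beta0 \<le> 1 / sqrt t0" using b1 by linarith
  also have "1 / sqrt t0 \<le> 4 * kappa0 powr (-1/2) * real (2*l+1) powr (-3/4)"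
    unfolding t0_def n_def by (rule final_arith[OF k])
  finally show "beta0 \<le> 4 * kappa0 powr (-1/2) * real (2*l+1) powr (-3/4)" .
qed simp

end
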